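(* For all mutually disjoint $K,I,J\subseteq\mathbb N_n$ put $$\beta_{K,I,J}\doteq\frac{1}{\sqrt{2^{\,n-|I\cup J|}}}\,b_K\,\mathbf c_{I,J}=\frac{1}{\sqrt{2^{\,n-|I\cup J|}}}\sum_{A\subseteq K}(-2)^{|A|}\,\mathbf n_A\,\mathbf c^*_I\mathbf c_J .$$ Then: (1) $\mathfrak B\doteq\{\beta_{K,I,J}: K,I,J\subseteq\mathbb N_n \text{ pairwise disjoint}\}$ is an orthonormal basis of $\mathcal L^2(\mathcal F)$. In fact $\langle b_K\mathbf c_{A,B},b_L\mathbf c_{C,D}\rangle_{\mathcal L^2(\mathcal F)}=\delta_{AC}\delta_{BD}\delta_{KL}\,2^{\,n-|A\cup B|}$ whenever $K,A,B$ are mutually disjoint and $L,C,D$ are mutually disjoint. (2) For every $k\in\mathbb N_0$, $\mathfrak B\cap\mathcal O_k$ is an orthonormal basis of $\mathcal O_k$. Explicitly, $$\mathfrak B\cap\mathcal O_k=\{\beta_{K,I,J}: K,I,J \text{ pairwise disjoint},\ |I|+|J|+2|K|=2l \text{ for some } 0\le l\le k\}.$$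
   Context: Let $\mathfrak h$ be a complex Hilbert space of finite dimension $n$ with a fixed orthonormal basis $\varphi_1,\dots,\varphi_n$, and let $\mathbb N_n=\{1,\dots,n\}$. Inner products are antilinear in the first argument. $\mathcal F=\bigoplus_{k=0}^n\bigwedge^k\mathfrak h$ is the fermion Fock space, with inner product $\langle f_1\wedge\cdots\wedge f_k,g_1\wedge\cdots\wedge g_l\rangle=\delta_{kl}\det(\langle f_i,g_j\rangle)_{i,j}$. Its vacuum $\Omega$ is $1\in\bigwedge^0\mathfrak h=\mathbb C$. The creation operators are $c^*(f)\omega=f\wedge\omega$, and $c(f)=c^*(f)^*$. For $A=\{a_1<\dots<a_k\}\subseteq\mathbb N_n$ put $\varphi_A=\varphi_{a_1}\wedge\cdots\wedge\varphi_{a_k}$, with $\varphi_\emptyset=\Omega$. Put - $\mathbf c^*_A=c^*(\varphi_{a_1})\cdots c^*(\varphi_{a_k})$, so that $\mathbf c^*_A\omega=\varphi_A\wedge\omega$; - $\mathbf c_A=(\mathbf c^*_A)^*=c(\varphi_{a_k})\cdots c(\varphi_{a_1})$; - $\mathbf c_{A,B}=\mathbf c^*_A\mathbf c_B$; - $\mathbf n_A=\mathbf c_{A,A}$. Empty products are the identity. For $K\subseteq\mathbb N_n$ define $b_K=\sum_{I\subseteq K}(-2)^{|I|}\mathbf n_I$. $\mathcal L^2(\mathcal F)$ is the space of all linear operators on $\mathcal F$ with inner product $\langle a,b\rangle=\operatorname{tr}(a^*b)$. For $\omega\in\mathcal F$ let $\mathbf c^*(\omega)\xi=\omega\wedge\xi$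 and $\mathbf c(\omega)=\mathbf c^*(\omega)^*$. For $k\in\mathbb N_0$, the space $\mathcal O_k$ of $k$-body operators is the complex linear span of all operators $\mathbf c^*(\omega)\mathbf c(\eta)$ with $\omega\in\bigwedge^r\mathfrak h$, $\eta\in\bigwedge^s\mathfrak h$, and $r+s=2l$ for some $0\le l\le k$. *)

theory Defs
  imports Complex_Main
begin

text \<open>Coordinate model of the fermion Fock space over an n-dimensional Hilbert space h with
orthonormal basis phi_1..phi_n: a vector of F is given by its coefficients w.r.t. the
orthonormal basis phi_A (A a subset of {1..n}), i.e. a function nat set => complex supported
on subsets of {1..n}.  Linear operators on F are given by their matrices w.r.t. this basis,
i.e. functions nat set => nat set => complex supported on Pow {1..n} x Pow {1..n}.\<close>

type_synonym fvec = "nat set \<Rightarrow> complex"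
type_synonym fop = "nat set \<Rightarrow> nat set \<Rightarrow> complex"

definition NN :: "nat \<Rightarrow> nat set" where
  "NN n = {1..n}"

text \<open>Sign with phi_A wedge phi_B = wsign A B * phi_(A Un B) for disjoint A, B.\<close>
definition wsign :: "nat set \<Rightarrow> nat set \<Rightarrow> complex" where
  "wsign A B = (-1) ^ card {(x, y). x \<in> A \<and> y \<in> B \<and> y < x}"

definition fock :: "nat \<Rightarrow> fvec set" where
  "fock n = {v. \<forall>A. v A \<noteq> 0 \<longrightarrow> A \<subseteq> NN n}"

text \<open>The k-th exterior power of h inside F (so h itself is wedge_k n 1).\<close>
definition wedge_k :: "nat \<Rightarrow> nat \<Rightarrow> fvec set" where
  "wedge_k n k = {v. \<forall>A. v A \<noteq> 0 \<longrightarrow> A \<subseteq> NN n \<and> card A = k}"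

definition basis_vec :: "nat set \<Rightarrow> fvec" where
  "basis_vec A = (\<lambda>B. if B = A then 1 else 0)"

text \<open>Matrix of c*(omega): xi |-> omega wedge xi.\<close>
definition cre :: "nat \<Rightarrow> fvec \<Rightarrow> fop" where
  "cre n \<omega> = (\<lambda>C B. if C \<subseteq> NN n \<and> B \<subseteq> C then wsign (C - B) B * \<omega> (C - B) else 0)"

definition adj :: "fop \<Rightarrow> fop" where
  "adj a = (\<lambda>A B. cnj (a B A))"

definition mmul :: "nat \<Rightarrow> fop \<Rightarrow> fop \<Rightarrow> fop" where
  "mmul n a b = (\<lambda>A C. \<Sum>B\<in>Pow (NN n). a A B * b B C)"

definition idop :: "nat \<Rightarrow> fop" where
  "idop n = (\<lambda>A B. if A = B \<and> A \<subseteq> NN n then 1 else 0)"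

definition cre1 :: "nat \<Rightarrow> nat \<Rightarrow> fop" where
  "cre1 n a = cre n (basis_vec {a})"

definition bcre :: "nat \<Rightarrow> nat set \<Rightarrow> fop" where
  "bcre n A = foldr (mmul n) (map (cre1 n) (sorted_list_of_set A)) (idop n)"

definition bann :: "nat \<Rightarrow> nat set \<Rightarrow> fop" where
  "bann n A = adj (bcre n A)"

definition bcc :: "nat \<Rightarrow> nat set \<Rightarrow> nat set \<Rightarrow> fop" where
  "bcc n A B = mmul n (bcre n A) (bann n B)"

definition bnum :: "nat \<Rightarrow> nat set \<Rightarrow> fop" where
  "bnum n A = bcc n A A"

definition bK :: "nat \<Rightarrow> nat set \<Rightarrow> fop" where
  "bK n K = (\<lambda>X Y. \<Sum>I\<in>Pow K. (-2) ^ card I * bnum n I X Y)"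

definition beta :: "nat \<Rightarrow> nat set \<Rightarrow> nat set \<Rightarrow> nat set \<Rightarrow> fop" where
  "beta n K I J = (\<lambda>X Y. complex_of_real (1 / sqrt (2 ^ (n - card (I \<union> J))))
                         * mmul n (bK n K) (bcc n I J) X Y)"

text \<open>Hilbert-Schmidt inner product tr(a* b).\<close>
definition hs_inner :: "nat \<Rightarrow> fop \<Rightarrow> fop \<Rightarrow> complex" where
  "hs_inner n a b = (\<Sum>A\<in>Pow (NN n). \<Sum>B\<in>Pow (NN n). cnj (a A B) * b A B)"

text \<open>L^2(F): all linear operators on F.\<close>
definition Lop :: "nat \<Rightarrow> fop set" where
  "Lop n = {a. \<forall>A B. a A B \<noteq> 0 \<longrightarrow> A \<subseteq> NN n \<and> B \<subseteq> NN n}"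

definition cspan :: "fop set \<Rightarrow> fop set" where
  "cspan S = {x. \<exists>F c. finite F \<and> F \<subseteq> S \<and> (\<forall>A B. x A B = (\<Sum>y\<in>F. c y * y A B))}"

definition kbody :: "nat \<Rightarrow> nat \<Rightarrow> fop set" where
  "kbody n k = cspan {mmul n (cre n \<omega>) (adj (cre n \<eta>)) | \<omega> \<eta> r s l.
       \<omega> \<in> wedge_k n r \<and> \<eta> \<in> wedge_k n s \<and> r + s = 2 * l \<and> l \<le> k}"

definition is_onb :: "nat \<Rightarrow> fop set \<Rightarrow> fop set \<Rightarrow> bool" where
  "is_onb n S V \<longleftrightarrow> S \<subseteq> V \<and> (\<forall>x\<in>S. hs_inner n x x = 1)
     \<and> (\<forall>x\<in>S. \<forall>y\<in>S. x \<noteq> y \<longrightarrow> hs_inner n x y = 0) \<and> cspan S = V"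

definition pdisj :: "nat set \<Rightarrow> nat set \<Rightarrow> nat set \<Rightarrow> bool" where
  "pdisj K I J \<longleftrightarrow> K \<inter> I = {} \<and> K \<inter> J = {} \<and> I \<inter> J = {}"

definition frakB :: "nat \<Rightarrow> fop set" where
  "frakB n = {beta n K I J | K I J. K \<subseteq> NN n \<and> I \<subseteq> NN n \<and> J \<subseteq> NN n \<and> pdisj K I J}"

end

theory Submission
  imports Defs
begin

lemma finite_NN[simp]: "finite (NN n)" by (simp add: NN_def)
lemma card_NN[simp]: "card (NN n) = n" by (simp add: NN_def)

lemma ws_fin: "finite A \<Longrightarrow> finite B \<Longrightarrow> finite {(x, y). x \<in> A \<and> y \<in> B \<and> y < (x::nat)}"
  by (rule finite_subset[of _ "A \<times> B"]) auto

lemma ws_union_left: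
  assumes "finite A1" "finite A2" "finite B" "A1 \<inter> A2 = {}"
  shows "wsign (A1 \<union> A2) B = wsign A1 B * wsign A2 B"
proof -
  have e: "{(x, y). x \<in> A1 \<union> A2 \<and> y \<in> B \<and> y < x} =
     {(x, y). x \<in> A1 \<and> y \<in> B \<and> y < x} \<union> {(x, y). x \<in> A2 \<and> y \<in> B \<and> y < x}" by auto
  show ?thesis unfolding wsign_def e
    by (subst card_Un_disjoint) (use assms ws_fin in \<open>auto simp: power_add\<close>)
qed

lemma ws_union_right:
  assumes "finite B1" "finite B2" "finite A" "B1 \<inter> B2 = {}"
  shows "wsign A (B1 \<union> B2) = wsign A B1 * wsign A B2"
proof -
  have e: "{(x, y). x \<in> A \<and> y \<in> B1 \<union> B2 \<and> y < x} =
     {(x, y). x \<in> A \<and> y \<in> B1 \<and> y < x} \<union> {(x, y). x \<in> A \<and> y \<in> B2 \<and> y < x}" by auto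
  show ?thesis unfolding wsign_def e
    by (subst card_Un_disjoint) (use assms ws_fin in \<open>auto simp: power_add\<close>)
qed

lemma ws_sq[simp]: "wsign A B * wsign A B = 1"
  unfolding wsign_def by (simp flip: power_add)

lemma ws_cnj[simp]: "cnj (wsign A B) = wsign A B"
  unfolding wsign_def by simp

lemma ws_empty1[simp]: "wsign {} B = 1" and ws_empty2[simp]: "wsign A {} = 1"
  unfolding wsign_def by simp_all

lemma ws_single_less: "(\<And>y. y \<in> B \<Longrightarrow> a < y) \<Longrightarrow> wsign {a} B = 1"
proof -
  assume h: "\<And>y. y \<in> B \<Longrightarrow> a < y"
  have "{(x, y). x \<in> {a} \<and> y \<in> B \<and> y < x} = {}" using h by fastforce
  show ?thesis unfolding wsign_def by (subst \<open>_ = {}\<close>) simp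
qed


definition Ec :: "nat \<Rightarrow> nat set \<Rightarrow> fop" where
  "Ec n A = (\<lambda>X Y. if Y \<subseteq> NN n \<and> A \<inter> Y = {} \<and> X = A \<union> Y then wsign A Y else 0)"

lemma sum_delta_if:
  assumes "P \<Longrightarrow> z0 \<in> S" "finite S"
  shows "(\<Sum>Z\<in>S. f Z * (if P \<and> Z = z0 then c Z else 0)) = (if P then f z0 * c z0 else (0::complex))"
proof -
  have "(\<Sum>Z\<in>S. f Z * (if P \<and> Z = z0 then c Z else 0)) = (\<Sum>Z\<in>S. if Z = z0 then (if P then f Z * c Z else 0) else 0)"
    by (rule sum.cong) auto
  also have "\<dots> = (if P then f z0 * c z0 else 0)" using assms by (auto simp: sum.delta')
  finally show ?thesis .
qed

lemma cre1_eq: "cre1 n a X Z = (if X \<subseteq> NN n \<and> Z \<subseteq> X \<and> X - Z = {a} then wsign {a} Z else 0)"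
  unfolding cre1_def cre_def basis_vec_def by auto

lemma bcre_list:
  "sorted_wrt (<) xs \<Longrightarrow> set xs \<subseteq> NN n \<Longrightarrow> foldr (mmul n) (map (cre1 n) xs) (idop n) = Ec n (set xs)"
proof (induction xs)
  case Nil
  show ?case unfolding idop_def Ec_def by (intro ext) auto
next
  case (Cons a xs)
  define A' where "A' = set xs"
  have fA: "finite A'" by (simp add: A'_def)
  have aN: "a \<in> NN n" and A'N: "A' \<subseteq> NN n" using Cons.prems by (auto simp: A'_def)
  have less: "\<And>y. y \<in> A' \<Longrightarrow> a < y" using Cons.prems by (auto simp: A'_def)
  hence anA: "a \<notin> A'" by blast
  have IH: "foldr (mmul n) (map (cre1 n) xs) (idop n) = Ec n A'"
    using Cons by (auto simp: A'_def)
  show ?case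
  proof (rule ext, rule ext)
    fix X Y
    have "foldr (mmul n) (map (cre1 n) (a # xs)) (idop n) X Y
       = (\<Sum>Z\<in>Pow (NN n). cre1 n a X Z * (if (Y \<subseteq> NN n \<and> A' \<inter> Y = {}) \<and> Z = A' \<union> Y then wsign A' Y else 0))"
      by (simp add: IH mmul_def Ec_def conj_assoc)
    also have "\<dots> = (if Y \<subseteq> NN n \<and> A' \<inter> Y = {} then cre1 n a X (A' \<union> Y) * wsign A' Y else 0)"
      using A'N by (intro sum_delta_if) auto
    also have "\<dots> = Ec n (set (a # xs)) X Y"
    proof (cases "Y \<subseteq> NN n \<and> A' \<inter> Y = {}")
      case True
      hence fY: "finite Y" using finite_subset[of Y "NN n"] by simp
      have c: "(X \<subseteq> NN n \<and> A' \<union> Y \<subseteq> X \<and> X - (A' \<union> Y) = {a}) \<longleftrightarrow> (a \<notin> Y \<and> X = insert a (A' \<union> Y))"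
        using aN anA A'N True by auto
      have s: "wsign {a} (A' \<union> Y) * wsign A' Y = wsign (insert a A') Y"
      proof -
        have "wsign {a} (A' \<union> Y) = wsign {a} A' * wsign {a} Y"
          using True fA fY by (simp add: ws_union_right)
        moreover have "wsign {a} A' = 1" using less by (rule ws_single_less)
        moreover have "wsign (insert a A') Y = wsign {a} Y * wsign A' Y"
          using ws_union_left[of "{a}" A' Y] fA fY anA by simp
        ultimately show ?thesis by simp
      qed
      show ?thesis using True c s by (auto simp: cre1_eq Ec_def A'_def)
    next
      case False
      then show ?thesis by (auto simp: Ec_def A'_def)
    qed
    finally show "foldr (mmul n) (map (cre1 n) (a # xs)) (idop n) X Y = Ec n (set (a # xs)) X Y" .
  qed
qed

lemma bcre_eq: assumes h: "A \<subseteq> NN n" shows "bcre n A = Ec n A"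
proof -
  have f: "finite A" by (rule finite_subset[OF h]) simp
  have s: "sorted_wrt (<) (sorted_list_of_set A)" using strict_sorted_list_of_set[of A] by simp
  have e: "set (sorted_list_of_set A) = A" using f by simp
  have "foldr (mmul n) (map (cre1 n) (sorted_list_of_set A)) (idop n) = Ec n (set (sorted_list_of_set A))"
    by (rule bcre_list[OF s]) (unfold e, rule h)
  thus ?thesis unfolding bcre_def e .
qed


definition Eb :: "nat \<Rightarrow> nat set \<Rightarrow> nat set \<Rightarrow> fop" where
  "Eb n I J = (\<lambda>X Y. if J \<subseteq> Y \<and> Y \<subseteq> NN n \<and> I \<inter> (Y - J) = {} \<and> X = I \<union> (Y - J)
      then wsign I (Y - J) * wsign J (Y - J) else 0)"

definition chi :: "nat set \<Rightarrow> nat set \<Rightarrow> complex" where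
  "chi K X = (-1) ^ card (K \<inter> X)"

definition T :: "nat \<Rightarrow> nat set \<Rightarrow> nat set \<Rightarrow> nat set \<Rightarrow> fop" where
  "T n K I J = (\<lambda>X Y. chi K X * Eb n I J X Y)"

lemma Ec_alt: "A \<subseteq> NN n \<Longrightarrow> Ec n A X Z = (if (A \<subseteq> X \<and> X \<subseteq> NN n) \<and> Z = X - A then wsign A Z else 0)"
  unfolding Ec_def by (rule if_cong) auto

lemma bcc_eq: assumes "I \<subseteq> NN n" "J \<subseteq> NN n" shows "bcc n I J = Eb n I J"
proof (intro ext)
  fix X Y
  have "bcc n I J X Y = (\<Sum>Z\<in>Pow (NN n). Ec n I X Z * (if (J \<subseteq> Y \<and> Y \<subseteq> NN n) \<and> Z = Y - J then wsign J Z else 0))"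
    unfolding bcc_def bann_def mmul_def adj_def using assms
    by (simp add: bcre_eq Ec_alt[of J] if_distrib[where f=cnj] cong: if_cong)
  also have "\<dots> = (if J \<subseteq> Y \<and> Y \<subseteq> NN n then Ec n I X (Y - J) * wsign J (Y - J) else 0)"
    by (rule sum_delta_if) auto
  also have "\<dots> = Eb n I J X Y"
    unfolding Eb_def Ec_def by auto
  finally show "bcc n I J X Y = Eb n I J X Y" .
qed

lemma bnum_eq: "A \<subseteq> NN n \<Longrightarrow> bnum n A X Y = (if A \<subseteq> Y \<and> Y \<subseteq> NN n \<and> X = Y then 1 else 0)"
  unfolding bnum_def by (simp add: bcc_eq Eb_def) (auto simp: Un_absorb1 Diff_partition)

lemma prodsum: "finite M \<Longrightarrow> (\<Sum>Z\<in>Pow M. \<Prod>a\<in>Z. g a) = (\<Prod>a\<in>M. g a + (1::complex))"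
  using prod_add[of M g "\<lambda>_. 1"] by simp

lemma chi_prod: "finite Z \<Longrightarrow> chi K Z = (\<Prod>a\<in>Z. if a \<in> K then -1 else 1)"
  unfolding chi_def by (simp add: prod.If_cases Int_commute)

lemma chi_sym: "chi K Z = chi Z K" unfolding chi_def by (simp add: Int_commute)

lemma chi_prod': "finite K \<Longrightarrow> chi K Z = (\<Prod>a\<in>K. if a \<in> Z then -1 else 1)"
  by (subst chi_sym) (rule chi_prod)

lemma S1: assumes "finite M"
  shows "(\<Sum>K\<in>Pow M. chi K U * chi K V) = (if U \<inter> M = V \<inter> M then 2 ^ card M else 0)"
proof -
  define h where "h a = (if a \<in> U then -1 else 1) * (if a \<in> V then -1 else (1::complex))" for a
  have "(\<Sum>K\<in>Pow M. chi K U * chi K V) = (\<Sum>K\<in>Pow M. \<Prod>a\<in>K. h a)"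
  proof (rule sum.cong)
    fix K assume "K \<in> Pow M"
    hence "finite K" using assms finite_subset by blast
    thus "chi K U * chi K V = (\<Prod>a\<in>K. h a)"
      by (simp add: chi_prod' h_def prod.distrib)
  qed simp
  also have "\<dots> = (\<Prod>a\<in>M. h a + 1)" by (rule prodsum[OF assms])
  also have "\<dots> = (if U \<inter> M = V \<inter> M then 2 ^ card M else 0)"
  proof (cases "U \<inter> M = V \<inter> M")
    case True
    hence "\<And>a. a \<in> M \<Longrightarrow> h a + 1 = 2" unfolding h_def by auto
    hence "(\<Prod>a\<in>M. h a + 1) = (\<Prod>a\<in>M. 2)" by (rule prod.cong[OF refl])
    thus ?thesis using True by simp
  next
    case False
    then obtain a where "a \<in> M" "(a \<in> U) \<noteq> (a \<in> V)" by blast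
    hence "h a + 1 = 0" unfolding h_def by auto
    hence "(\<Prod>a\<in>M. h a + 1) = 0" using assms \<open>a \<in> M\<close> by (intro prod_zero) auto
    thus ?thesis using False by simp
  qed
  finally show ?thesis .
qed

lemma S2: assumes "finite S" shows "(\<Sum>I\<in>Pow S. (-2::complex) ^ card I) = (-1) ^ card S"
proof -
  have "(\<Sum>I\<in>Pow S. (-2::complex) ^ card I) = (\<Sum>I\<in>Pow S. \<Prod>a\<in>I. -2)" by simp
  also have "\<dots> = (\<Prod>a\<in>S. -2 + 1)" by (rule prodsum[OF assms])
  finally show ?thesis by simp
qed

lemma S3: assumes "finite A"
  shows "(\<Sum>K\<in>Pow A. (-1) ^ card K * chi K X) = (if A \<subseteq> X then 2 ^ card A else 0)"
proof -
  define h where "h a = (-1) * (if a \<in> X then -1 else (1::complex))" for a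
  have "(\<Sum>K\<in>Pow A. (-1) ^ card K * chi K X) = (\<Sum>K\<in>Pow A. \<Prod>a\<in>K. h a)"
  proof (rule sum.cong)
    fix K assume "K \<in> Pow A"
    hence "finite K" using assms finite_subset by blast
    have "(\<Prod>a\<in>K. h a) = (\<Prod>a\<in>K. -1) * (\<Prod>a\<in>K. if a \<in> X then -1 else 1)"
      unfolding h_def by (rule prod.distrib)
    thus "(-1) ^ card K * chi K X = (\<Prod>a\<in>K. h a)"
      using \<open>finite K\<close> by (simp add: chi_prod')
  qed simp
  also have "\<dots> = (\<Prod>a\<in>A. h a + 1)" by (rule prodsum[OF assms])
  also have "\<dots> = (if A \<subseteq> X then 2 ^ card A else 0)"
  proof (cases "A \<subseteq> X")
    case True
    hence "\<And>a. a \<in> A \<Longrightarrow> h a + 1 = 2" unfolding h_def by auto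
    hence "(\<Prod>a\<in>A. h a + 1) = (\<Prod>a\<in>A. 2)" by (rule prod.cong[OF refl])
    thus ?thesis using True by simp
  next
    case False
    then obtain a where "a \<in> A" "a \<notin> X" by blast
    hence "h a + 1 = 0" unfolding h_def by auto
    hence "(\<Prod>a\<in>A. h a + 1) = 0" using assms \<open>a \<in> A\<close> by (intro prod_zero) auto
    thus ?thesis using False by simp
  qed
  finally show ?thesis .
qed

lemma bK_eq: assumes "K \<subseteq> NN n"
  shows "bK n K X Y = (if X = Y \<and> Y \<subseteq> NN n then chi K Y else 0)"
proof (cases "X = Y \<and> Y \<subseteq> NN n")
  case True
  have fK: "finite K" using assms finite_subset[of K "NN n"] by simp
  have "bK n K X Y = (\<Sum>I\<in>Pow K. if I \<subseteq> Y then (-2) ^ card I else 0)"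
    unfolding bK_def using True assms by (intro sum.cong) (auto simp: bnum_eq)
  also have "\<dots> = (\<Sum>I\<in>{I \<in> Pow K. I \<subseteq> Y}. (-2) ^ card I)"
    using fK by (intro sum.inter_filter[symmetric]) simp
  also have "{I \<in> Pow K. I \<subseteq> Y} = Pow (K \<inter> Y)" by auto
  also have "(\<Sum>I\<in>Pow (K \<inter> Y). (-2::complex) ^ card I) = chi K Y"
    using fK S2[of "K \<inter> Y"] by (simp add: chi_def del: Pow_Int_eq)
  finally show ?thesis using True by simp
next
  case False
  have "bK n K X Y = (\<Sum>I\<in>Pow K. 0)"
    unfolding bK_def using False assms by (intro sum.cong) (auto simp: bnum_eq)
  thus ?thesis using False by auto
qed

lemma mmul_bK: assumes "K \<subseteq> NN n"
  shows "mmul n (bK n K) b X Y = (if X \<subseteq> NN n then chi K X * b X Y else 0)"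
proof -
  have "mmul n (bK n K) b X Y = (\<Sum>Z\<in>Pow (NN n). if Z = X then (if X \<subseteq> NN n then chi K X * b X Y else 0) else 0)"
    unfolding mmul_def using assms by (intro sum.cong) (auto simp: bK_eq)
  also have "\<dots> = (if X \<subseteq> NN n then chi K X * b X Y else 0)"
    by (simp add: sum.delta')
  finally show ?thesis .
qed

lemma Eb_supp: "Eb n I J X Y \<noteq> 0 \<Longrightarrow> I \<subseteq> NN n \<Longrightarrow> X \<subseteq> NN n \<and> Y \<subseteq> NN n"
  unfolding Eb_def by (auto split: if_splits)

lemma mmul_bK_bcc: assumes "K \<subseteq> NN n" "I \<subseteq> NN n" "J \<subseteq> NN n"
  shows "mmul n (bK n K) (bcc n I J) = T n K I J"
proof (intro ext)
  fix X Y
  show "mmul n (bK n K) (bcc n I J) X Y = T n K I J X Y"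
    using Eb_supp[of n I J X Y] assms
    by (cases "X \<subseteq> NN n") (auto simp: mmul_bK bcc_eq T_def)
qed

lemma beta_T: assumes "K \<subseteq> NN n" "I \<subseteq> NN n" "J \<subseteq> NN n"
  shows "beta n K I J = (\<lambda>X Y. complex_of_real (1 / sqrt (2 ^ (n - card (I \<union> J)))) * T n K I J X Y)"
  unfolding beta_def using mmul_bK_bcc[OF assms] by simp


lemma fin_sub: "A \<subseteq> NN n \<Longrightarrow> finite A"
  using finite_subset[of A "NN n"] by simp

lemma Eb_nz: "Eb n I J X Y \<noteq> 0 \<Longrightarrow> I \<inter> J = {} \<Longrightarrow> I = X - Y \<and> J = Y - X"
  unfolding Eb_def by (auto split: if_splits)

lemma Eb_sq: "Eb n I J X Y * Eb n I J X Y = (if J \<subseteq> Y \<and> Y \<subseteq> NN n \<and> I \<inter> (Y - J) = {} \<and> X = I \<union> (Y - J) then 1 else 0)"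
proof -
  have "wsign I (Y - J) * wsign J (Y - J) * (wsign I (Y - J) * wsign J (Y - J))
     = (wsign I (Y - J) * wsign I (Y - J)) * (wsign J (Y - J) * wsign J (Y - J))" by (simp only: mult_ac)
  thus ?thesis unfolding Eb_def by simp
qed

lemma Eb_cnj[simp]: "cnj (Eb n I J X Y) = Eb n I J X Y"
  unfolding Eb_def by simp

lemma chi_cnj[simp]: "cnj (chi K X) = chi K X"
  unfolding chi_def by simp

lemma sumEb:
  assumes I: "I \<subseteq> NN n" and J: "J \<subseteq> NN n" and d: "I \<inter> J = {}"
  shows "(\<Sum>X\<in>Pow (NN n). \<Sum>Y\<in>Pow (NN n).
      (if J \<subseteq> Y \<and> Y \<subseteq> NN n \<and> I \<inter> (Y - J) = {} \<and> X = I \<union> (Y - J) then g X Y else (0::complex)))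
    = (\<Sum>Z\<in>Pow (NN n - (I \<union> J)). g (I \<union> Z) (J \<union> Z))"
proof -
  define M where "M = NN n - (I \<union> J)"
  define c where "c Y \<longleftrightarrow> J \<subseteq> Y \<and> Y \<subseteq> NN n \<and> I \<inter> (Y - J) = {}" for Y
  have "(\<Sum>X\<in>Pow (NN n). \<Sum>Y\<in>Pow (NN n).
      (if J \<subseteq> Y \<and> Y \<subseteq> NN n \<and> I \<inter> (Y - J) = {} \<and> X = I \<union> (Y - J) then g X Y else (0::complex)))
    = (\<Sum>Y\<in>Pow (NN n). \<Sum>X\<in>Pow (NN n). (if X = I \<union> (Y - J) then (if c Y then g X Y else 0) else 0))"
    by (subst sum.swap) (intro sum.cong refl, auto simp: c_def)
  also have "\<dots> = (\<Sum>Y\<in>Pow (NN n). if c Y then g (I \<union> (Y - J)) Y else 0)"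
  proof (intro sum.cong refl)
    fix Y assume "Y \<in> Pow (NN n)"
    hence "I \<union> (Y - J) \<in> Pow (NN n)" using I by auto
    thus "(\<Sum>X\<in>Pow (NN n). (if X = I \<union> (Y - J) then (if c Y then g X Y else 0) else 0)) =
      (if c Y then g (I \<union> (Y - J)) Y else 0)"
      by (simp add: sum.delta')
  qed
  also have "\<dots> = (\<Sum>Y\<in>{Y \<in> Pow (NN n). c Y}. g (I \<union> (Y - J)) Y)"
    by (rule sum.inter_filter[symmetric]) simp
  also have "{Y \<in> Pow (NN n). c Y} = (\<lambda>Z. J \<union> Z) ` Pow M"
  proof
    show "{Y \<in> Pow (NN n). c Y} \<subseteq> (\<lambda>Z. J \<union> Z) ` Pow M"
    proof
      fix Y assume "Y \<in> {Y \<in> Pow (NN n). c Y}"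
      hence Y: "Y \<subseteq> NN n" "J \<subseteq> Y" "I \<inter> (Y - J) = {}" by (auto simp: c_def)
      hence "Y = J \<union> (Y - J)" "Y - J \<in> Pow M" by (auto simp: M_def)
      thus "Y \<in> (\<lambda>Z. J \<union> Z) ` Pow M" by blast
    qed
    show "(\<lambda>Z. J \<union> Z) ` Pow M \<subseteq> {Y \<in> Pow (NN n). c Y}"
      using J by (auto simp: c_def M_def)
  qed
  also have "(\<Sum>Y\<in>(\<lambda>Z. J \<union> Z) ` Pow M. g (I \<union> (Y - J)) Y) = (\<Sum>Z\<in>Pow M. g (I \<union> (J \<union> Z - J)) (J \<union> Z))"
  proof (rule sum.reindex_cong[of "\<lambda>Z. J \<union> Z"])
    show "inj_on (\<lambda>Z. J \<union> Z) (Pow M)"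
      by (rule inj_onI) (auto simp: M_def)
  qed auto
  also have "\<dots> = (\<Sum>Z\<in>Pow M. g (I \<union> Z) (J \<union> Z))"
  proof (intro sum.cong refl)
    fix Z assume "Z \<in> Pow M"
    hence "J \<union> Z - J = Z" by (auto simp: M_def)
    thus "g (I \<union> (J \<union> Z - J)) (J \<union> Z) = g (I \<union> Z) (J \<union> Z)" by simp
  qed
  finally show ?thesis by (simp add: M_def)
qed

lemma hs_T:
  assumes sub: "K \<subseteq> NN n" "A \<subseteq> NN n" "B \<subseteq> NN n" "L \<subseteq> NN n" "C \<subseteq> NN n" "D \<subseteq> NN n"
    and d: "pdisj K A B" "pdisj L C D"
  shows "hs_inner n (T n K A B) (T n L C D) = (if A = C \<and> B = D \<and> K = L then 2 ^ (n - card (A \<union> B)) else 0)"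
proof (cases "A = C \<and> B = D")
  case False
  have "hs_inner n (T n K A B) (T n L C D) = (\<Sum>X\<in>Pow (NN n). \<Sum>Y\<in>Pow (NN n). 0)"
    unfolding hs_inner_def
  proof (intro sum.cong refl)
    fix X Y
    show "cnj (T n K A B X Y) * T n L C D X Y = 0"
    proof (rule ccontr)
      assume "cnj (T n K A B X Y) * T n L C D X Y \<noteq> 0"
      hence "Eb n A B X Y \<noteq> 0" "Eb n C D X Y \<noteq> 0" by (auto simp: T_def)
      hence "A = X - Y \<and> B = Y - X" "C = X - Y \<and> D = Y - X"
        using Eb_nz[of n A B X Y] Eb_nz[of n C D X Y] d by (auto simp: pdisj_def)
      thus False using False by simp
    qed
  qed
  thus ?thesis using False by auto
next
  case True
  hence C: "C = A" "D = B" by auto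
  define M where "M = NN n - (A \<union> B)"
  have fM: "finite M" by (simp add: M_def)
  have "hs_inner n (T n K A B) (T n L C D) = (\<Sum>X\<in>Pow (NN n). \<Sum>Y\<in>Pow (NN n).
      (if B \<subseteq> Y \<and> Y \<subseteq> NN n \<and> A \<inter> (Y - B) = {} \<and> X = A \<union> (Y - B) then chi K X * chi L X else (0::complex)))"
    unfolding hs_inner_def C
  proof (intro sum.cong refl)
    fix X Y
    have "cnj (T n K A B X Y) * T n L A B X Y = (chi K X * chi L X) * (Eb n A B X Y * Eb n A B X Y)"
      by (simp add: T_def mult_ac)
    thus "cnj (T n K A B X Y) * T n L A B X Y =
      (if B \<subseteq> Y \<and> Y \<subseteq> NN n \<and> A \<inter> (Y - B) = {} \<and> X = A \<union> (Y - B) then chi K X * chi L X else 0)"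
      by (simp only: Eb_sq) simp
  qed
  also have "\<dots> = (\<Sum>Z\<in>Pow M. chi K (A \<union> Z) * chi L (A \<union> Z))"
    using sumEb[of A n B "\<lambda>X Y. chi K X * chi L X"] sub d by (simp add: pdisj_def M_def)
  also have "\<dots> = (\<Sum>Z\<in>Pow M. chi Z K * chi Z L)"
  proof (intro sum.cong refl)
    fix Z assume "Z \<in> Pow M"
    have "K \<inter> (A \<union> Z) = K \<inter> Z" "L \<inter> (A \<union> Z) = L \<inter> Z" using d True by (auto simp: pdisj_def)
    thus "chi K (A \<union> Z) * chi L (A \<union> Z) = chi Z K * chi Z L"
      unfolding chi_def by (simp add: Int_commute)
  qed
  also have "\<dots> = (if K \<inter> M = L \<inter> M then 2 ^ card M else 0)" by (rule S1[OF fM])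
  also have "K \<inter> M = K" using sub d C by (auto simp: M_def pdisj_def)
  also have "L \<inter> M = L" using sub d C by (auto simp: M_def pdisj_def)
  also have "card M = n - card (A \<union> B)"
    unfolding M_def using sub by (subst card_Diff_subset) (auto intro: fin_sub)
  finally show ?thesis using True by auto
qed


lemma cspan_iff: "x \<in> cspan S \<longleftrightarrow> (\<exists>F c. finite F \<and> F \<subseteq> S \<and> x = (\<lambda>A B. \<Sum>y\<in>F. c y * y A B))"
  unfolding cspan_def by (auto simp: fun_eq_iff)

lemma cspan_zero: "(\<lambda>A B. 0) \<in> cspan S"
  unfolding cspan_iff by (rule exI[of _ "{}"]) simp

lemma cspan_base: "y \<in> S \<Longrightarrow> y \<in> cspan S"
  unfolding cspan_iff by (rule exI[of _ "{y}"], rule exI[of _ "\<lambda>_. 1"]) simp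

lemma sum_ext_if: "finite G \<Longrightarrow> F \<subseteq> G \<Longrightarrow>
   (\<Sum>y\<in>G. (if y \<in> F then c y else 0) * f y) = (\<Sum>y\<in>F. c y * (f y :: complex))"
proof -
  assume G: "finite G" "F \<subseteq> G"
  have "(\<Sum>y\<in>G. (if y \<in> F then c y else 0) * f y) = (\<Sum>y\<in>G. if y \<in> F then c y * f y else 0)"
    by (rule sum.cong) auto
  also have "\<dots> = (\<Sum>y\<in>{y \<in> G. y \<in> F}. c y * f y)" by (rule sum.inter_filter[symmetric, OF G(1)])
  also have "{y \<in> G. y \<in> F} = F" using G by auto
  finally show ?thesis .
qed

lemma cspan_add: assumes "x \<in> cspan S" "z \<in> cspan S" shows "(\<lambda>A B. x A B + z A B) \<in> cspan S"
proof -
  obtain F1 c1 where 1: "finite F1" "F1 \<subseteq> S" "x = (\<lambda>A B. \<Sum>y\<in>F1. c1 y * y A B)" using assms(1) unfolding cspan_iff by blast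
  obtain F2 c2 where 2: "finite F2" "F2 \<subseteq> S" "z = (\<lambda>A B. \<Sum>y\<in>F2. c2 y * y A B)" using assms(2) unfolding cspan_iff by blast
  define c where "c y = (if y \<in> F1 then c1 y else 0) + (if y \<in> F2 then c2 y else 0)" for y
  have "(\<lambda>A B. x A B + z A B) = (\<lambda>A B. \<Sum>y\<in>F1 \<union> F2. c y * y A B)"
  proof (intro ext)
    fix A B
    have "(\<Sum>y\<in>F1 \<union> F2. c y * y A B) = (\<Sum>y\<in>F1 \<union> F2. (if y \<in> F1 then c1 y else 0) * y A B)
        + (\<Sum>y\<in>F1 \<union> F2. (if y \<in> F2 then c2 y else 0) * y A B)"
      unfolding c_def by (simp add: distrib_right sum.distrib)
    also have "\<dots> = x A B + z A B"
      using 1 2 by (simp add: sum_ext_if)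
    finally show "x A B + z A B = (\<Sum>y\<in>F1 \<union> F2. c y * y A B)" by simp
  qed
  thus ?thesis unfolding cspan_iff using 1 2 by blast
qed

lemma cspan_smult: assumes "x \<in> cspan S" shows "(\<lambda>A B. d * x A B) \<in> cspan S"
proof -
  obtain F c where 1: "finite F" "F \<subseteq> S" "x = (\<lambda>A B. \<Sum>y\<in>F. c y * y A B)" using assms unfolding cspan_iff by blast
  define c' where "c' y = d * c y" for y
  have "(\<lambda>A B. d * x A B) = (\<lambda>A B. \<Sum>y\<in>F. c' y * y A B)"
    unfolding 1(3) sum_distrib_left c'_def by (intro ext sum.cong refl) (simp only: mult.assoc)
  thus ?thesis unfolding cspan_iff using 1 by blast
qed

lemma cspan_sum: assumes "finite I" "\<And>i. i \<in> I \<Longrightarrow> g i \<noteq> 0 \<Longrightarrow> f i \<in> cspan S"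
  shows "(\<lambda>A B. \<Sum>i\<in>I. g i * f i A B) \<in> cspan S"
  using assms
proof (induction I rule: finite_induct)
  case empty
  then show ?case using cspan_zero by simp
next
  case (insert i I)
  have r: "(\<lambda>A B. \<Sum>i\<in>I. g i * f i A B) \<in> cspan S" using insert by blast
  have e: "(\<lambda>A B. \<Sum>i\<in>insert i I. g i * f i A B) = (\<lambda>A B. g i * f i A B + (\<Sum>i\<in>I. g i * f i A B))"
    using insert.hyps by simp
  show ?case
  proof (cases "g i = 0")
    case True
    then show ?thesis using r e by simp
  next
    case False
    hence "f i \<in> cspan S" using insert.prems by blast
    hence "(\<lambda>A B. g i * f i A B) \<in> cspan S" by (rule cspan_smult)
    thus ?thesis unfolding e using cspan_add[OF _ r] by blast
  qed
qed

lemma cspan_idem: assumes "S \<subseteq> cspan U" shows "cspan S \<subseteq> cspan U"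
proof
  fix x assume "x \<in> cspan S"
  then obtain F c where 1: "finite F" "F \<subseteq> S" "x = (\<lambda>A B. \<Sum>y\<in>F. c y * y A B)" unfolding cspan_iff by blast
  show "x \<in> cspan U" unfolding 1(3) using 1 assms by (intro cspan_sum) auto
qed

lemma hs_lin: "hs_inner n z (\<lambda>A B. \<Sum>y\<in>F. c y * y A B) = (\<Sum>y\<in>F. c y * hs_inner n z y)"
proof -
  have "hs_inner n z (\<lambda>A B. \<Sum>y\<in>F. c y * y A B)
     = (\<Sum>X\<in>Pow (NN n). \<Sum>Y\<in>Pow (NN n). \<Sum>y\<in>F. c y * (cnj (z X Y) * y X Y))"
    unfolding hs_inner_def by (simp add: sum_distrib_left mult_ac)
  also have "\<dots> = (\<Sum>X\<in>Pow (NN n). \<Sum>y\<in>F. \<Sum>Y\<in>Pow (NN n). c y * (cnj (z X Y) * y X Y))"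
    by (rule sum.cong[OF refl], rule sum.swap)
  also have "\<dots> = (\<Sum>y\<in>F. \<Sum>X\<in>Pow (NN n). \<Sum>Y\<in>Pow (NN n). c y * (cnj (z X Y) * y X Y))"
    by (rule sum.swap)
  also have "\<dots> = (\<Sum>y\<in>F. c y * hs_inner n z y)"
    unfolding hs_inner_def by (simp add: sum_distrib_left)
  finally show ?thesis .
qed

lemma hs_orth_span: assumes "x \<in> cspan S" "\<And>y. y \<in> S \<Longrightarrow> hs_inner n z y = 0"
  shows "hs_inner n z x = 0"
proof -
  obtain F c where 1: "finite F" "F \<subseteq> S" "x = (\<lambda>A B. \<Sum>y\<in>F. c y * y A B)" using assms unfolding cspan_iff by blast
  show ?thesis unfolding 1(3) hs_lin using 1 assms(2) by (simp add: subset_iff)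
qed

lemma cspan_Lop: assumes "S \<subseteq> Lop n" shows "cspan S \<subseteq> Lop n"
proof
  fix x assume "x \<in> cspan S"
  then obtain F c where 1: "finite F" "F \<subseteq> S" "x = (\<lambda>A B. \<Sum>y\<in>F. c y * y A B)" unfolding cspan_iff by blast
  show "x \<in> Lop n" unfolding Lop_def mem_Collect_eq
  proof (intro allI impI)
    fix A B assume "x A B \<noteq> 0"
    then obtain y where "y \<in> F" "c y * y A B \<noteq> 0" unfolding 1(3) by (meson sum.not_neutral_contains_not_neutral)
    hence "y A B \<noteq> 0" "y \<in> Lop n" using 1 assms by auto
    thus "A \<subseteq> NN n \<and> B \<subseteq> NN n" unfolding Lop_def by blast
  qed
qed


lemma T_in: assumes "beta n K I J \<in> S" "K \<subseteq> NN n" "I \<subseteq> NN n" "J \<subseteq> NN n"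
  shows "T n K I J \<in> cspan S"
proof -
  define s where "s = sqrt (2 ^ (n - card (I \<union> J)))"
  have sp: "s > 0" unfolding s_def by simp
  have "(\<lambda>X Y. complex_of_real s * beta n K I J X Y) \<in> cspan S"
    by (rule cspan_smult, rule cspan_base, rule assms(1))
  moreover have "(\<lambda>X Y. complex_of_real s * beta n K I J X Y) = T n K I J"
  proof (intro ext)
    fix X Y
    have "complex_of_real s * complex_of_real (1 / s) = 1" using sp
      by (simp flip: of_real_mult)
    thus "complex_of_real s * beta n K I J X Y = T n K I J X Y"
      unfolding beta_T[OF assms(2-4)] s_def[symmetric] using sp by (simp add: mult.assoc[symmetric])
  qed
  ultimately show ?thesis by simp
qed

lemma beta_in_frakB: "K \<subseteq> NN n \<Longrightarrow> I \<subseteq> NN n \<Longrightarrow> J \<subseteq> NN n \<Longrightarrow> pdisj K I J \<Longrightarrow> beta n K I J \<in> frakB n"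
  unfolding frakB_def by blast

lemma Emat_eq:
  assumes X0: "X0 \<subseteq> NN n" and Y0: "Y0 \<subseteq> NN n"
  defines "A \<equiv> X0 - Y0" and "B \<equiv> Y0 - X0" and "Z0 \<equiv> X0 \<inter> Y0" and "M \<equiv> NN n - ((X0 - Y0) \<union> (Y0 - X0))"
  shows "(if X = X0 \<and> Y = Y0 then 1 else 0) =
    (\<Sum>K\<in>Pow M. (chi K Z0 * (wsign A Z0 * wsign B Z0) / 2 ^ card M) * T n K A B X Y)"
proof -
  have fM: "finite M" unfolding M_def by simp
  define c0 where "c0 = wsign A Z0 * wsign B Z0"
  have "(\<Sum>K\<in>Pow M. (chi K Z0 * c0 / 2 ^ card M) * T n K A B X Y)
      = (c0 / 2 ^ card M) * (\<Sum>K\<in>Pow M. chi K Z0 * chi K X) * Eb n A B X Y"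
    unfolding T_def by (simp add: sum_distrib_left sum_distrib_right mult_ac)
  also have "\<dots> = (if X = X0 \<and> Y = Y0 then 1 else 0)"
  proof (cases "B \<subseteq> Y \<and> Y \<subseteq> NN n \<and> A \<inter> (Y - B) = {} \<and> X = A \<union> (Y - B)")
    case False
    hence "Eb n A B X Y = 0" unfolding Eb_def by auto
    moreover have "\<not> (X = X0 \<and> Y = Y0)"
    proof
      assume "X = X0 \<and> Y = Y0"
      thus False using False Y0 unfolding A_def B_def by auto
    qed
    ultimately show ?thesis by simp
  next
    case True
    define Z where "Z = Y - B"
    have ZM: "Z \<subseteq> M" "Z0 \<subseteq> M" using True unfolding Z_def M_def A_def B_def Z0_def using X0 Y0 by auto
    have XZ: "X = A \<union> Z" using True Z_def by simp
    have "(\<Sum>K\<in>Pow M. chi K Z0 * chi K X) = (\<Sum>K\<in>Pow M. chi K Z0 * chi K Z)"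
    proof (intro sum.cong refl)
      fix K assume "K \<in> Pow M"
      hence "K \<inter> X = K \<inter> Z" unfolding XZ M_def A_def B_def by auto
      thus "chi K Z0 * chi K X = chi K Z0 * chi K Z" unfolding chi_def by simp
    qed
    also have "\<dots> = (if Z0 \<inter> M = Z \<inter> M then 2 ^ card M else 0)" by (rule S1[OF fM])
    also have "(Z0 \<inter> M = Z \<inter> M) \<longleftrightarrow> Z = Z0" using ZM by auto
    finally have sum: "(\<Sum>K\<in>Pow M. chi K Z0 * chi K X) = (if Z = Z0 then 2 ^ card M else 0)" .
    have Eb: "Eb n A B X Y = wsign A Z * wsign B Z" using True unfolding Eb_def Z_def by simp
    show ?thesis
    proof (cases "Z = Z0")
      case True': True
      have X: "X = X0" unfolding XZ True' A_def Z0_def by blast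
      have "Y = B \<union> Z" using True unfolding Z_def by blast
      hence "Y = Y0" unfolding True' B_def Z0_def by blast
      moreover have "c0 * (wsign A Z * wsign B Z) = (wsign A Z0 * wsign A Z0) * (wsign B Z0 * wsign B Z0)"
        unfolding c0_def True' by (simp only: mult_ac)
      ultimately show ?thesis unfolding sum Eb using True' X by simp
    next
      case False
      have "\<not> (X = X0 \<and> Y = Y0)"
      proof
        assume "X = X0 \<and> Y = Y0"
        hence "Z = Z0" unfolding Z_def Z0_def B_def by auto
        thus False using False by simp
      qed
      thus ?thesis unfolding sum using False by simp
    qed
  qed
  finally show ?thesis unfolding c0_def by simp
qed

lemma Emat_in:
  assumes X0: "X0 \<subseteq> NN n" and Y0: "Y0 \<subseteq> NN n"
  shows "(\<lambda>X Y. if X = X0 \<and> Y = Y0 then 1 else 0) \<in> cspan (frakB n)"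
proof -
  define A where "A = X0 - Y0"
  define B where "B = Y0 - X0"
  define Z0 where "Z0 = X0 \<inter> Y0"
  define M where "M = NN n - (A \<union> B)"
  have e: "(\<lambda>X Y. if X = X0 \<and> Y = Y0 then 1 else 0) =
    (\<lambda>X Y. \<Sum>K\<in>Pow M. (chi K Z0 * (wsign A Z0 * wsign B Z0) / 2 ^ card M) * T n K A B X Y)"
    using Emat_eq[OF X0 Y0] unfolding A_def B_def Z0_def M_def by blast
  show ?thesis unfolding e
  proof (rule cspan_sum)
    show "finite (Pow M)" unfolding M_def by simp
    fix K assume "K \<in> Pow M"
    hence "K \<subseteq> NN n" "A \<subseteq> NN n" "B \<subseteq> NN n" "pdisj K A B"
      using X0 Y0 unfolding M_def A_def B_def pdisj_def by auto
    thus "T n K A B \<in> cspan (frakB n)" by (intro T_in beta_in_frakB)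
  qed
qed

lemma Lop_in_span: assumes "a \<in> Lop n" shows "a \<in> cspan (frakB n)"
proof -
  have e: "a = (\<lambda>X Y. \<Sum>p\<in>Pow (NN n) \<times> Pow (NN n). a (fst p) (snd p) *
      (\<lambda>X Y. if X = fst p \<and> Y = snd p then 1 else 0) X Y)"
  proof (intro ext)
    fix X Y
    have "(\<Sum>p\<in>Pow (NN n) \<times> Pow (NN n). a (fst p) (snd p) * (if X = fst p \<and> Y = snd p then 1 else 0))
        = (\<Sum>p\<in>Pow (NN n) \<times> Pow (NN n). if p = (X, Y) then a X Y else 0)"
      by (intro sum.cong refl) auto
    also have "\<dots> = a X Y" using assms unfolding Lop_def by (auto simp: sum.delta')
    finally show "a X Y = (\<Sum>p\<in>Pow (NN n) \<times> Pow (NN n). a (fst p) (snd p) *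
      (\<lambda>X Y. if X = fst p \<and> Y = snd p then 1 else 0) X Y)" by simp
  qed
  show ?thesis
    by (subst e, rule cspan_sum) (auto intro!: Emat_in)
qed

lemma frakB_Lop: "frakB n \<subseteq> Lop n"
proof
  fix x assume "x \<in> frakB n"
  then obtain K I J where x: "x = beta n K I J" "K \<subseteq> NN n" "I \<subseteq> NN n" "J \<subseteq> NN n"
    unfolding frakB_def by blast
  show "x \<in> Lop n" unfolding Lop_def mem_Collect_eq
  proof (intro allI impI)
    fix X Y assume "x X Y \<noteq> 0"
    hence "Eb n I J X Y \<noteq> 0" unfolding x(1) beta_T[OF x(2-4)] T_def by auto
    thus "X \<subseteq> NN n \<and> Y \<subseteq> NN n" using Eb_supp x(3) by blast
  qed
qed

lemma finite_frakB: "finite (frakB n)"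
proof -
  have "frakB n \<subseteq> (\<lambda>(K, I, J). beta n K I J) ` (Pow (NN n) \<times> Pow (NN n) \<times> Pow (NN n))"
  proof
    fix x assume "x \<in> frakB n"
    then obtain K I J where x: "x = beta n K I J" "K \<subseteq> NN n" "I \<subseteq> NN n" "J \<subseteq> NN n"
      unfolding frakB_def by blast
    show "x \<in> (\<lambda>(K, I, J). beta n K I J) ` (Pow (NN n) \<times> Pow (NN n) \<times> Pow (NN n))"
      by (rule image_eqI[of _ _ "(K, I, J)"]) (use x in auto)
  qed
  thus ?thesis by (rule finite_subset) simp
qed

lemma hs_scale: "hs_inner n (\<lambda>X Y. c * a X Y) (\<lambda>X Y. d * b X Y) = cnj c * d * hs_inner n a b"
proof -
  have e: "cnj (c * a X Y) * (d * b X Y) = cnj c * d * (cnj (a X Y) * b X Y)" for X Y by simp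
  show ?thesis unfolding hs_inner_def e sum_distrib_left ..
qed

lemma sqrt_norm: "complex_of_real (1 / sqrt (2 ^ m)) * complex_of_real (1 / sqrt (2 ^ m)) * 2 ^ m = 1"
proof -
  have "(1 / sqrt (2 ^ m)) * (1 / sqrt (2 ^ m)) * (2::real) ^ m = 1"
    by (simp add: field_simps)
  hence "complex_of_real ((1 / sqrt (2 ^ m)) * (1 / sqrt (2 ^ m)) * (2::real) ^ m) = 1" by simp
  thus ?thesis by (simp only: of_real_mult of_real_power of_real_numeral)
qed

lemma hs_beta:
  assumes "K \<subseteq> NN n" "A \<subseteq> NN n" "B \<subseteq> NN n" "L \<subseteq> NN n" "C \<subseteq> NN n" "D \<subseteq> NN n"
    and "pdisj K A B" "pdisj L C D"
  shows "hs_inner n (beta n K A B) (beta n L C D) = (if A = C \<and> B = D \<and> K = L then 1 else 0)"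
proof (cases "A = C \<and> B = D \<and> K = L")
  case True
  thus ?thesis
    unfolding beta_T[OF assms(1-3)] beta_T[OF assms(4-6)] hs_scale hs_T[OF assms]
    using sqrt_norm[of "n - card (A \<union> B)"] by simp
next
  case False
  thus ?thesis
    unfolding beta_T[OF assms(1-3)] beta_T[OF assms(4-6)] hs_scale hs_T[OF assms] by auto
qed


definition Sk :: "nat \<Rightarrow> nat \<Rightarrow> fop set" where
  "Sk n k = {beta n K I J | K I J. K \<subseteq> NN n \<and> I \<subseteq> NN n \<and> J \<subseteq> NN n \<and> pdisj K I J
               \<and> (\<exists>l\<le>k. card I + card J + 2 * card K = 2 * l)}"

definition Gen :: "nat \<Rightarrow> nat \<Rightarrow> fop set" where
  "Gen n k = {mmul n (cre n \<omega>) (adj (cre n \<eta>)) | \<omega> \<eta> r s l.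
       \<omega> \<in> wedge_k n r \<and> \<eta> \<in> wedge_k n s \<and> r + s = 2 * l \<and> l \<le> k}"

lemma kbody_Gen: "kbody n k = cspan (Gen n k)"
  unfolding kbody_def Gen_def ..

lemma keyEb:
  assumes N: "A \<subseteq> NN n" "I \<subseteq> NN n" "J \<subseteq> NN n"
    and d: "A \<inter> I = {}" "A \<inter> J = {}" "I \<inter> J = {}"
  shows "Eb n (A \<union> I) (A \<union> J) X Y = wsign I A * wsign J A * (if A \<subseteq> X then Eb n I J X Y else 0)"
proof -
  have fA: "finite A" "finite I" "finite J" using N by (auto intro: fin_sub)
  have ceq: "(A \<union> J \<subseteq> Y \<and> Y \<subseteq> NN n \<and> (A \<union> I) \<inter> (Y - (A \<union> J)) = {} \<and> X = (A \<union> I) \<union> (Y - (A \<union> J)))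
      \<longleftrightarrow> (A \<subseteq> X \<and> J \<subseteq> Y \<and> Y \<subseteq> NN n \<and> I \<inter> (Y - J) = {} \<and> X = I \<union> (Y - J))"
    using d by blast
  show ?thesis
  proof (cases "A \<subseteq> X \<and> J \<subseteq> Y \<and> Y \<subseteq> NN n \<and> I \<inter> (Y - J) = {} \<and> X = I \<union> (Y - J)")
    case False
    thus ?thesis unfolding Eb_def using ceq by auto
  next
    case True
    define W where "W = Y - (A \<union> J)"
    have fW: "finite W" unfolding W_def using True fin_sub by blast
    have AY: "A \<subseteq> Y - J" using True d(1) by blast
    have YJ: "Y - J = A \<union> W" using AY unfolding W_def by blast
    have AW: "A \<inter> W = {}" unfolding W_def by blast
    have lc: "A \<union> J \<subseteq> Y \<and> Y \<subseteq> NN n \<and> (A \<union> I) \<inter> (Y - (A \<union> J)) = {} \<and> X = (A \<union> I) \<union> (Y - (A \<union> J))"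
      by (rule iffD2[OF ceq True])
    have l: "Eb n (A \<union> I) (A \<union> J) X Y = wsign (A \<union> I) W * wsign (A \<union> J) W"
      unfolding Eb_def W_def if_P[OF lc] ..
    have r: "Eb n I J X Y = wsign I (A \<union> W) * wsign J (A \<union> W)"
      unfolding Eb_def if_P[OF conjunct2[OF True]] by (simp only: YJ)
    have l2: "wsign (A \<union> I) W * wsign (A \<union> J) W = (wsign A W * wsign A W) * (wsign I W * wsign J W)"
      using fA fW d by (simp add: ws_union_left mult_ac)
    have r2: "wsign I A * wsign J A * (wsign I (A \<union> W) * wsign J (A \<union> W))
       = (wsign I A * wsign I A) * (wsign J A * wsign J A) * (wsign I W * wsign J W)"
      using fA fW AW by (simp add: ws_union_right mult_ac)
    show ?thesis unfolding if_P[OF conjunct1[OF True]] l r using l2 r2 by simp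
  qed
qed

lemma bcre_cre: assumes "P \<subseteq> NN n" shows "bcre n P = cre n (basis_vec P)"
proof (intro ext)
  fix C B
  show "bcre n P C B = cre n (basis_vec P) C B"
    unfolding bcre_eq[OF assms] Ec_def cre_def basis_vec_def using assms by auto
qed

lemma basis_wedge: "P \<subseteq> NN n \<Longrightarrow> basis_vec P \<in> wedge_k n (card P)"
  unfolding wedge_k_def basis_vec_def by auto

lemma Eb_in_Gen: assumes "P \<subseteq> NN n" "Q \<subseteq> NN n" "card P + card Q = 2 * l" "l \<le> k"
  shows "Eb n P Q \<in> Gen n k"
proof -
  have "Eb n P Q = mmul n (cre n (basis_vec P)) (adj (cre n (basis_vec Q)))"
    unfolding bcc_eq[OF assms(1,2), symmetric] bcc_def bann_def bcre_cre[OF assms(1)] bcre_cre[OF assms(2)] ..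
  thus ?thesis unfolding Gen_def using basis_wedge[OF assms(1)] basis_wedge[OF assms(2)] assms(3,4) by blast
qed

lemma chi_expand: assumes "finite K"
  shows "chi K X = (\<Sum>A\<in>Pow K. (-2) ^ card A * (if A \<subseteq> X then 1 else 0))"
proof -
  have "(\<Sum>A\<in>Pow K. (-2) ^ card A * (if A \<subseteq> X then 1 else 0)) = (\<Sum>A\<in>Pow K. if A \<subseteq> X then (-2::complex) ^ card A else 0)"
    by (intro sum.cong refl) auto
  also have "\<dots> = (\<Sum>A\<in>{A \<in> Pow K. A \<subseteq> X}. (-2) ^ card A)"
    using assms by (intro sum.inter_filter[symmetric]) simp
  also have "{A \<in> Pow K. A \<subseteq> X} = Pow (K \<inter> X)" by auto
  also have "(\<Sum>A\<in>Pow (K \<inter> X). (-2::complex) ^ card A) = chi K X"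
    using assms S2[of "K \<inter> X"] by (simp add: chi_def del: Pow_Int_eq)
  finally show ?thesis by simp
qed

lemma Sk_sub_kbody: "Sk n k \<subseteq> kbody n k"
proof
  fix x assume "x \<in> Sk n k"
  then obtain K I J l where x: "x = beta n K I J" "K \<subseteq> NN n" "I \<subseteq> NN n" "J \<subseteq> NN n" "pdisj K I J"
     "l \<le> k" "card I + card J + 2 * card K = 2 * l"
    unfolding Sk_def by blast
  have fK: "finite K" using x(2) by (rule fin_sub)
  have T: "T n K I J = (\<lambda>X Y. \<Sum>A\<in>Pow K. ((-2) ^ card A * (wsign I A * wsign J A)) * Eb n (A \<union> I) (A \<union> J) X Y)"
  proof (intro ext)
    fix X Y
    have "T n K I J X Y = (\<Sum>A\<in>Pow K. (-2) ^ card A * (if A \<subseteq> X then 1 else 0)) * Eb n I J X Y"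
      unfolding T_def chi_expand[OF fK] ..
    also have "\<dots> = (\<Sum>A\<in>Pow K. (-2) ^ card A * (if A \<subseteq> X then Eb n I J X Y else 0))"
      by (simp add: sum_distrib_right mult.assoc) (intro sum.cong refl, simp)
    also have "\<dots> = (\<Sum>A\<in>Pow K. ((-2) ^ card A * (wsign I A * wsign J A)) * Eb n (A \<union> I) (A \<union> J) X Y)"
    proof (intro sum.cong refl)
      fix A assume "A \<in> Pow K"
      hence "A \<subseteq> NN n" "A \<inter> I = {}" "A \<inter> J = {}" using x(2,5) unfolding pdisj_def by auto
      hence "Eb n (A \<union> I) (A \<union> J) X Y = wsign I A * wsign J A * (if A \<subseteq> X then Eb n I J X Y else 0)"
        using x(3-5) unfolding pdisj_def by (intro keyEb) auto
      hence "(wsign I A * wsign J A) * Eb n (A \<union> I) (A \<union> J) X Y = (wsign I A * wsign I A) * (wsign J A * wsign J A) * (if A \<subseteq> X then Eb n I J X Y else 0)"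
        by (simp only: mult_ac)
      thus "(-2) ^ card A * (if A \<subseteq> X then Eb n I J X Y else 0) =
         ((-2) ^ card A * (wsign I A * wsign J A)) * Eb n (A \<union> I) (A \<union> J) X Y"
        by (simp add: mult.assoc)
    qed
    finally show "T n K I J X Y = (\<Sum>A\<in>Pow K. ((-2) ^ card A * (wsign I A * wsign J A)) * Eb n (A \<union> I) (A \<union> J) X Y)" .
  qed
  have "T n K I J \<in> kbody n k" unfolding kbody_Gen T
  proof (rule cspan_sum)
    show "finite (Pow K)" using fK by simp
    fix A assume A: "A \<in> Pow K"
    have dA: "A \<inter> I = {}" "A \<inter> J = {}" using A x(5) unfolding pdisj_def by auto
    have fA: "finite A" using A fK finite_subset by auto
    have cA: "card A \<le> card K" using A fK by (simp add: card_mono)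
    have "card (A \<union> I) = card A + card I" using dA fA x(3) by (simp add: card_Un_disjoint fin_sub)
    moreover have "card (A \<union> J) = card A + card J" using dA fA x(4) by (simp add: card_Un_disjoint fin_sub)
    ultimately have "card (A \<union> I) + card (A \<union> J) = 2 * (l - card K + card A)" using x(7) cA by simp
    moreover have "l - card K + card A \<le> k" using x(6,7) cA by simp
    moreover have "A \<union> I \<subseteq> NN n" "A \<union> J \<subseteq> NN n" using A x(2-4) by auto
    ultimately show "Eb n (A \<union> I) (A \<union> J) \<in> cspan (Gen n k)"
      by (intro cspan_base Eb_in_Gen) auto
  qed
  hence "(\<lambda>X Y. complex_of_real (1 / sqrt (2 ^ (n - card (I \<union> J)))) * T n K I J X Y) \<in> kbody n k"
    unfolding kbody_Gen by (rule cspan_smult)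
  thus "x \<in> kbody n k" unfolding x(1) beta_T[OF x(2-4)] .
qed


lemma Eb_in_Sk: assumes P: "P \<subseteq> NN n" and Q: "Q \<subseteq> NN n" and c: "card P + card Q = 2 * l" "l \<le> k"
  shows "Eb n P Q \<in> cspan (Sk n k)"
proof -
  define A where "A = P \<inter> Q"
  define I where "I = P - Q"
  define J where "J = Q - P"
  have PA: "P = A \<union> I" "Q = A \<union> J" unfolding A_def I_def J_def by auto
  have sub: "A \<subseteq> NN n" "I \<subseteq> NN n" "J \<subseteq> NN n" using P Q unfolding A_def I_def J_def by auto
  have d: "A \<inter> I = {}" "A \<inter> J = {}" "I \<inter> J = {}" unfolding A_def I_def J_def by auto
  have fA: "finite A" "finite I" "finite J" using sub by (auto intro: fin_sub)
  have cP: "card P = card A + card I" "card Q = card A + card J"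
    unfolding PA using fA d by (auto simp: card_Un_disjoint)
  have e: "Eb n P Q = (\<lambda>X Y. \<Sum>K\<in>Pow A. (wsign I A * wsign J A * (-1) ^ card K / 2 ^ card A) * T n K I J X Y)"
  proof (intro ext)
    fix X Y
    have "(\<Sum>K\<in>Pow A. (wsign I A * wsign J A * (-1) ^ card K / 2 ^ card A) * T n K I J X Y)
       = (wsign I A * wsign J A / 2 ^ card A) * (\<Sum>K\<in>Pow A. (-1) ^ card K * chi K X) * Eb n I J X Y"
      unfolding T_def by (simp add: sum_distrib_left sum_distrib_right sum_divide_distrib mult_ac)
    also have "\<dots> = wsign I A * wsign J A * (if A \<subseteq> X then Eb n I J X Y else 0)"
      unfolding S3[OF fA(1)] by simp
    also have "\<dots> = Eb n P Q X Y" unfolding PA by (rule keyEb[OF sub d, symmetric])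
    finally show "Eb n P Q X Y = (\<Sum>K\<in>Pow A. (wsign I A * wsign J A * (-1) ^ card K / 2 ^ card A) * T n K I J X Y)" ..
  qed
  show ?thesis unfolding e
  proof (rule cspan_sum)
    show "finite (Pow A)" using fA by simp
    fix K assume K: "K \<in> Pow A"
    have KN: "K \<subseteq> NN n" using K sub by auto
    have pd: "pdisj K I J" using K d unfolding pdisj_def by auto
    have cK: "card K \<le> card A" using K fA by (simp add: card_mono)
    have "card I + card J + 2 * card K = 2 * (l - card A + card K)" "l - card A + card K \<le> k"
      using c cP cK by auto
    hence "beta n K I J \<in> Sk n k" unfolding Sk_def using KN sub pd by blast
    thus "T n K I J \<in> cspan (Sk n k)" using KN sub by (intro T_in)
  qed
qed

lemma Ec_cnj[simp]: "cnj (Ec n P X Z) = Ec n P X Z"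
  unfolding Ec_def by simp

lemma cre_expand: assumes "\<omega> \<in> wedge_k n r"
  shows "cre n \<omega> X Z = (\<Sum>P\<in>Pow (NN n). \<omega> P * Ec n P X Z)"
proof -
  have "(\<Sum>P\<in>Pow (NN n). \<omega> P * Ec n P X Z) = (\<Sum>P\<in>Pow (NN n). \<omega> P * (if (Z \<subseteq> X \<and> X \<subseteq> NN n) \<and> P = X - Z then wsign P Z else 0))"
  proof (intro sum.cong refl)
    fix P assume "P \<in> Pow (NN n)"
    hence "P \<subseteq> NN n" by simp
    hence "(Z \<subseteq> NN n \<and> P \<inter> Z = {} \<and> X = P \<union> Z) \<longleftrightarrow> ((Z \<subseteq> X \<and> X \<subseteq> NN n) \<and> P = X - Z)" by blast
    thus "\<omega> P * Ec n P X Z = \<omega> P * (if (Z \<subseteq> X \<and> X \<subseteq> NN n) \<and> P = X - Z then wsign P Z else 0)"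
      unfolding Ec_def by simp
  qed
  also have "\<dots> = (if Z \<subseteq> X \<and> X \<subseteq> NN n then \<omega> (X - Z) * wsign (X - Z) Z else 0)"
    by (rule sum_delta_if) auto
  also have "\<dots> = cre n \<omega> X Z" unfolding cre_def by (auto simp: mult.commute)
  finally show ?thesis ..
qed

lemma Eb_sum: assumes "P \<subseteq> NN n" "Q \<subseteq> NN n"
  shows "Eb n P Q X Y = (\<Sum>Z\<in>Pow (NN n). Ec n P X Z * Ec n Q Y Z)"
  unfolding bcc_eq[OF assms, symmetric] bcc_def bann_def mmul_def adj_def bcre_eq[OF assms(1)] bcre_eq[OF assms(2)]
  by simp

lemma Gen_in_Sk: assumes "g \<in> Gen n k" shows "g \<in> cspan (Sk n k)"
proof -
  obtain \<omega> \<eta> r s l where g: "g = mmul n (cre n \<omega>) (adj (cre n \<eta>))" "\<omega> \<in> wedge_k n r" "\<eta> \<in> wedge_k n s"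
    "r + s = 2 * l" "l \<le> k"
    using assms unfolding Gen_def by blast
  define N where "N = Pow (NN n)"
  have e: "g = (\<lambda>X Y. \<Sum>p\<in>N \<times> N. (\<omega> (fst p) * cnj (\<eta> (snd p))) * Eb n (fst p) (snd p) X Y)"
  proof (intro ext)
    fix X Y
    have "g X Y = (\<Sum>Z\<in>N. (\<Sum>P\<in>N. \<omega> P * Ec n P X Z) * (\<Sum>Q\<in>N. cnj (\<eta> Q) * Ec n Q Y Z))"
      unfolding g mmul_def adj_def cre_expand[OF g(2)] cre_expand[OF g(3)] N_def by simp
    also have "\<dots> = (\<Sum>Z\<in>N. \<Sum>P\<in>N. \<Sum>Q\<in>N. (\<omega> P * cnj (\<eta> Q)) * (Ec n P X Z * Ec n Q Y Z))"
      unfolding sum_product by (intro sum.cong refl) (simp add: mult_ac)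
    also have "\<dots> = (\<Sum>P\<in>N. \<Sum>Z\<in>N. \<Sum>Q\<in>N. (\<omega> P * cnj (\<eta> Q)) * (Ec n P X Z * Ec n Q Y Z))"
      by (rule sum.swap)
    also have "\<dots> = (\<Sum>P\<in>N. \<Sum>Q\<in>N. \<Sum>Z\<in>N. (\<omega> P * cnj (\<eta> Q)) * (Ec n P X Z * Ec n Q Y Z))"
      by (rule sum.cong[OF refl], rule sum.swap)
    also have "\<dots> = (\<Sum>P\<in>N. \<Sum>Q\<in>N. (\<omega> P * cnj (\<eta> Q)) * Eb n P Q X Y)"
      by (intro sum.cong refl) (simp add: Eb_sum N_def sum_distrib_left)
    also have "\<dots> = (\<Sum>p\<in>N \<times> N. (\<omega> (fst p) * cnj (\<eta> (snd p))) * Eb n (fst p) (snd p) X Y)"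
      by (simp add: sum.cartesian_product case_prod_beta)
    finally show "g X Y = (\<Sum>p\<in>N \<times> N. (\<omega> (fst p) * cnj (\<eta> (snd p))) * Eb n (fst p) (snd p) X Y)" .
  qed
  show ?thesis unfolding e
  proof (rule cspan_sum)
    show "finite (N \<times> N)" unfolding N_def by simp
    fix p assume p: "p \<in> N \<times> N" "\<omega> (fst p) * cnj (\<eta> (snd p)) \<noteq> 0"
    hence "\<omega> (fst p) \<noteq> 0" "\<eta> (snd p) \<noteq> 0" by auto
    hence "card (fst p) = r" "card (snd p) = s" using g(2,3) unfolding wedge_k_def by auto
    thus "Eb n (fst p) (snd p) \<in> cspan (Sk n k)" using p(1) g(4,5) unfolding N_def
      by (intro Eb_in_Sk) auto
  qed
qed


lemma frakB_orth: assumes "x \<in> frakB n" "y \<in> frakB n"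
  shows "hs_inner n x y = (if x = y then 1 else 0)"
proof -
  obtain K A B where x: "x = beta n K A B" "K \<subseteq> NN n" "A \<subseteq> NN n" "B \<subseteq> NN n" "pdisj K A B"
    using assms(1) unfolding frakB_def by blast
  obtain L C D where y: "y = beta n L C D" "L \<subseteq> NN n" "C \<subseteq> NN n" "D \<subseteq> NN n" "pdisj L C D"
    using assms(2) unfolding frakB_def by blast
  have h: "hs_inner n x y = (if A = C \<and> B = D \<and> K = L then 1 else 0)"
    unfolding x(1) y(1) by (rule hs_beta) (use x y in auto)
  show ?thesis
  proof (cases "A = C \<and> B = D \<and> K = L")
    case True
    hence "x = y" using x y by simp
    thus ?thesis using h True by simp
  next
    case False
    have yy: "hs_inner n y y = 1" unfolding y(1) using hs_beta[OF y(2-4) y(2-4) y(5) y(5)] by simp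
    have "x \<noteq> y"
    proof
      assume "x = y"
      thus False using h False yy by simp
    qed
    thus ?thesis using h False by simp
  qed
qed

lemma Sk_sub_frakB: "Sk n k \<subseteq> frakB n"
  unfolding Sk_def frakB_def by blast

lemma kbody_sub_Sk: "kbody n k \<subseteq> cspan (Sk n k)"
  unfolding kbody_Gen by (rule cspan_idem) (use Gen_in_Sk in blast)

lemma frakB_kbody: "frakB n \<inter> kbody n k = Sk n k"
proof
  show "Sk n k \<subseteq> frakB n \<inter> kbody n k" using Sk_sub_frakB Sk_sub_kbody by blast
  show "frakB n \<inter> kbody n k \<subseteq> Sk n k"
  proof
    fix x assume xin: "x \<in> frakB n \<inter> kbody n k"
    then obtain K I J where x: "x = beta n K I J" "K \<subseteq> NN n" "I \<subseteq> NN n" "J \<subseteq> NN n" "pdisj K I J"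
      unfolding frakB_def by blast
    show "x \<in> Sk n k"
    proof (cases "\<exists>l\<le>k. card I + card J + 2 * card K = 2 * l")
      case True
      thus ?thesis unfolding Sk_def using x by blast
    next
      case False
      have "x \<in> cspan (Sk n k)" using xin kbody_sub_Sk by blast
      moreover have "hs_inner n x y = 0" if yS: "y \<in> Sk n k" for y
      proof -
        obtain K' I' J' l where y: "y = beta n K' I' J'" "K' \<subseteq> NN n" "I' \<subseteq> NN n" "J' \<subseteq> NN n" "pdisj K' I' J'"
          "l \<le> k" "card I' + card J' + 2 * card K' = 2 * l"
          using yS unfolding Sk_def by blast
        have "\<not> (I = I' \<and> J = J' \<and> K = K')" using False y(6,7) by auto
        thus ?thesis unfolding x(1) y(1) using hs_beta[OF x(2-4) y(2-4) x(5) y(5)] by auto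
      qed
      ultimately have "hs_inner n x x = 0" by (rule hs_orth_span)
      moreover have "hs_inner n x x = 1" using frakB_orth xin by auto
      ultimately show ?thesis by simp
    qed
  qed
qed

theorem mainTheorem1:
  fixes n :: nat
  shows "is_onb n (frakB n) (Lop n)
    \<and> (\<forall>K A B L C D. K \<subseteq> NN n \<and> A \<subseteq> NN n \<and> B \<subseteq> NN n \<and> L \<subseteq> NN n \<and> C \<subseteq> NN n
          \<and> D \<subseteq> NN n \<and> pdisj K A B \<and> pdisj L C D \<longrightarrow>
          hs_inner n (mmul n (bK n K) (bcc n A B)) (mmul n (bK n L) (bcc n C D))
            = (if A = C \<and> B = D \<and> K = L then 2 ^ (n - card (A \<union> B)) else 0))
    \<and> (\<forall>k::nat. is_onb n (frakB n \<inter> kbody n k) (kbody n k)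
          \<and> frakB n \<inter> kbody n k =
            {beta n K I J | K I J. K \<subseteq> NN n \<and> I \<subseteq> NN n \<and> J \<subseteq> NN n \<and> pdisj K I J
               \<and> (\<exists>l\<le>k. card I + card J + 2 * card K = 2 * l)})"
proof (intro conjI allI impI)
  show "is_onb n (frakB n) (Lop n)"
    unfolding is_onb_def
  proof (intro conjI ballI impI)
    show "frakB n \<subseteq> Lop n" by (rule frakB_Lop)
    show "hs_inner n x x = 1" if "x \<in> frakB n" for x using frakB_orth[OF that that] by simp
    show "hs_inner n x y = 0" if "x \<in> frakB n" "y \<in> frakB n" "x \<noteq> y" for x y
      using frakB_orth[OF that(1,2)] that(3) by simp
    show "cspan (frakB n) = Lop n"
      using cspan_Lop[OF frakB_Lop] Lop_in_span by blast
  qed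
next
  fix K A B L C D
  assume h: "K \<subseteq> NN n \<and> A \<subseteq> NN n \<and> B \<subseteq> NN n \<and> L \<subseteq> NN n \<and> C \<subseteq> NN n
          \<and> D \<subseteq> NN n \<and> pdisj K A B \<and> pdisj L C D"
  show "hs_inner n (mmul n (bK n K) (bcc n A B)) (mmul n (bK n L) (bcc n C D))
            = (if A = C \<and> B = D \<and> K = L then 2 ^ (n - card (A \<union> B)) else 0)"
    using h by (simp add: mmul_bK_bcc hs_T)
next
  fix k
  show "frakB n \<inter> kbody n k =
            {beta n K I J | K I J. K \<subseteq> NN n \<and> I \<subseteq> NN n \<and> J \<subseteq> NN n \<and> pdisj K I J
               \<and> (\<exists>l\<le>k. card I + card J + 2 * card K = 2 * l)}"
    using frakB_kbody unfolding Sk_def .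
  show "is_onb n (frakB n \<inter> kbody n k) (kbody n k)"
    unfolding is_onb_def frakB_kbody
  proof (intro conjI ballI impI)
    show "Sk n k \<subseteq> kbody n k" by (rule Sk_sub_kbody)
    show "hs_inner n x x = 1" if "x \<in> Sk n k" for x
      using frakB_orth that Sk_sub_frakB by (metis subsetD)
    show "hs_inner n x y = 0" if "x \<in> Sk n k" "y \<in> Sk n k" "x \<noteq> y" for x y
      using frakB_orth[of x n y] that Sk_sub_frakB by auto
    have "cspan (Sk n k) \<subseteq> kbody n k"
      unfolding kbody_Gen by (rule cspan_idem) (use Sk_sub_kbody kbody_Gen in blast)
    thus "cspan (Sk n k) = kbody n k" using kbody_sub_Sk by blast
  qed
qed

end
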